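(* Let $X$, $Z$ be topological vector spaces and $C\subseteq Z$ a nonempty closed convex cone with $C^-\neq\{0\}$. Assume that there exist a bounded set $B\subseteq Z$ and a neighborhood $V$ of $0$ in $Z$ with $V\subseteq B-C$. If $f:X\to\mathcal{F}(Z,C)$ is lower continuous at $x_0\in{\rm dom\,} f$, then $f$ is efficient at $x_0$.
   Context: $\mathcal{F}(Z,C)=\{A\subseteq Z\colon A=\operatorname{cl}(A+C)\}$ (empty set included); $C^-=\{z^*\in Z^*\colon z^*(z)\le0\ \forall z\in C\}$; ${\rm dom\,} f=\{x\colon f(x)\neq\emptyset\}$. A set is bounded if it is absorbed by every neighborhood of $0$. $f$ is lower continuous at $x_0$ iff for every $z_0\in f(x_0)$ and every neighborhood $V$ of $z_0$ there is a neighborhood $U$ of $x_0$ with $f(x)\cap V\neq\emptyset$ for all $x\in U$. $f$ is efficient at $x_0$ iff there exist a neighborhood $U$ of $x_0$ and a bounded set $B'\subseteq Z$ with $f(x)\cap B'\neq\emptyset$ for all $x\in U$. *)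

theory Defs
  imports "HOL-Analysis.Analysis"
begin

text \<open>Real topological vector spaces: addition and scalar multiplication are
  jointly continuous (product topology, stated via basic open sets;
  no separation axiom assumed).\<close>
class topological_real_vector = real_vector + topological_space +
  assumes continuous_add_tvs: "\<And>x y W. open W \<Longrightarrow> x + y \<in> W \<Longrightarrow>
      \<exists>U1 U2. open U1 \<and> open U2 \<and> x \<in> U1 \<and> y \<in> U2 \<and> (\<forall>a\<in>U1. \<forall>b\<in>U2. a + b \<in> W)"
  assumes continuous_scaleR_tvs: "\<And>t x W. open W \<Longrightarrow> t *\<^sub>R x \<in> W \<Longrightarrow>
      \<exists>d>0. \<exists>U. open U \<and> x \<in> U \<and> (\<forall>s. \<bar>s - t\<bar> < d \<longrightarrow> (\<forall>b\<in>U. s *\<^sub>R b \<in> W))"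

definition nbhd :: "'a::topological_space set \<Rightarrow> 'a \<Rightarrow> bool" where
  "nbhd V x \<longleftrightarrow> (\<exists>W. open W \<and> x \<in> W \<and> W \<subseteq> V)"

definition absorbs :: "'a::real_vector set \<Rightarrow> 'a set \<Rightarrow> bool" where
  "absorbs U B \<longleftrightarrow> (\<exists>r>0. \<forall>t::real. \<bar>t\<bar> \<ge> r \<longrightarrow> B \<subseteq> (\<lambda>z. t *\<^sub>R z) ` U)"

definition tvs_bounded :: "'a::topological_real_vector set \<Rightarrow> bool" where
  "tvs_bounded B \<longleftrightarrow> (\<forall>U. nbhd U 0 \<longrightarrow> absorbs U B)"

definition set_plus_tvs :: "'a::real_vector set \<Rightarrow> 'a set \<Rightarrow> 'a set" where
  "set_plus_tvs A C = {a + c | a c. a \<in> A \<and> c \<in> C}"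

definition set_minus_tvs :: "'a::real_vector set \<Rightarrow> 'a set \<Rightarrow> 'a set" where
  "set_minus_tvs A C = {a - c | a c. a \<in> A \<and> c \<in> C}"

definition FZC :: "'a::topological_real_vector set \<Rightarrow> 'a set set" where
  "FZC C = {A. A = closure (set_plus_tvs A C)}"

definition topo_dual :: "('a::topological_real_vector \<Rightarrow> real) set" where
  "topo_dual = {g. linear g \<and> continuous_on UNIV g}"

definition neg_polar :: "'a::topological_real_vector set \<Rightarrow> ('a \<Rightarrow> real) set" where
  "neg_polar C = {g \<in> topo_dual. \<forall>z\<in>C. g z \<le> 0}"

definition dom_sv :: "('x \<Rightarrow> 'z set) \<Rightarrow> 'x set" where
  "dom_sv f = {x. f x \<noteq> {}}"

definition lower_continuous_at ::
  "('x::topological_space \<Rightarrow> 'z::topological_space set) \<Rightarrow> 'x \<Rightarrow> bool" where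
  "lower_continuous_at f x0 \<longleftrightarrow>
     (\<forall>z0\<in>f x0. \<forall>V. nbhd V z0 \<longrightarrow> (\<exists>U. nbhd U x0 \<and> (\<forall>x\<in>U. f x \<inter> V \<noteq> {})))"

definition efficient_at ::
  "('x::topological_space \<Rightarrow> 'z::topological_real_vector set) \<Rightarrow> 'x \<Rightarrow> bool" where
  "efficient_at f x0 \<longleftrightarrow>
     (\<exists>U B'. nbhd U x0 \<and> tvs_bounded B' \<and> (\<forall>x\<in>U. f x \<inter> B' \<noteq> {}))"

end

theory Submission
  imports Defs
begin

lemma bounded_translate:
  fixes B :: "'z::topological_real_vector set"
  assumes "tvs_bounded B"
  shows "tvs_bounded ((+) z0 ` B)"
  unfolding tvs_bounded_def
proof (intro allI impI)
  fix U :: "'z set" assume "nbhd U 0"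
  then obtain W where W: "open W" "0 \<in> W" "W \<subseteq> U" unfolding nbhd_def by blast
  obtain U1 U2 where U: "open U1" "open U2" "0 \<in> U1" "0 \<in> U2"
    "\<forall>a\<in>U1. \<forall>b\<in>U2. a + b \<in> W"
    using continuous_add_tvs[OF W(1), of 0 0] W(2) by auto
  have "nbhd U1 0" using U unfolding nbhd_def by blast
  then obtain r1 where r1: "r1 > 0" "\<forall>t. \<bar>t\<bar> \<ge> r1 \<longrightarrow> B \<subseteq> (\<lambda>z. t *\<^sub>R z) ` U1"
    using assms unfolding tvs_bounded_def absorbs_def by blast
  obtain d U' where d: "d > 0" "z0 \<in> U'" "\<forall>s. \<bar>s - 0\<bar> < d \<longrightarrow> (\<forall>b\<in>U'. s *\<^sub>R b \<in> U2)"
    using continuous_scaleR_tvs[OF U(2), of 0 z0] U(4) by auto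
  show "absorbs U ((+) z0 ` B)" unfolding absorbs_def
  proof (intro exI[of _ "max r1 (2/d)"] conjI allI impI)
    show "max r1 (2/d) > 0" using r1 by simp
    fix t :: real assume t: "max r1 (2/d) \<le> \<bar>t\<bar>"
    have tpos: "\<bar>t\<bar> > 0" using t r1 by linarith
    have "\<bar>1/t\<bar> < d"
    proof -
      have "2/d \<le> \<bar>t\<bar>" using t by simp
      hence "2 \<le> \<bar>t\<bar> * d" using d(1) by (simp add: field_simps)
      hence "1 < \<bar>t\<bar> * d" by simp
      thus ?thesis using tpos by (simp add: field_simps)
    qed
    hence w2: "(1/t) *\<^sub>R z0 \<in> U2" using d by auto
    show "(+) z0 ` B \<subseteq> (\<lambda>z. t *\<^sub>R z) ` U"
    proof
      fix y assume "y \<in> (+) z0 ` B"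
      then obtain b where b: "b \<in> B" "y = z0 + b" by auto
      then obtain w1 where w1: "w1 \<in> U1" "b = t *\<^sub>R w1" using r1 t by fastforce
      have "(1/t) *\<^sub>R z0 + w1 \<in> W" using U(5) w1 w2 by (metis add.commute)
      moreover have "y = t *\<^sub>R ((1/t) *\<^sub>R z0 + w1)"
        using b w1 tpos by (simp add: scaleR_add_right)
      ultimately show "y \<in> (\<lambda>z. t *\<^sub>R z) ` U" using W(3) by blast
    qed
  qed
qed

theorem mainTheorem4:
  fixes f :: "'x::topological_real_vector \<Rightarrow> 'z::topological_real_vector set"
    and C B V :: "'z set" and x0 :: 'x
  assumes "convex_cone C" and "closed C"
    and "neg_polar C \<noteq> {(\<lambda>_. 0)}"
    and "tvs_bounded B" and "nbhd V 0" and "V \<subseteq> set_minus_tvs B C"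
    and "\<forall>x. f x \<in> FZC C"
    and "x0 \<in> dom_sv f"
    and "lower_continuous_at f x0"
  shows "efficient_at f x0"
proof -
  obtain z0 where z0: "z0 \<in> f x0" using assms(8) unfolding dom_sv_def by auto
  obtain W where W: "open W" "0 \<in> W" "W \<subseteq> V" using assms(5) unfolding nbhd_def by blast
  obtain U1 U2 where U: "open U1" "open U2" "z0 \<in> U1" "-z0 \<in> U2"
    "\<forall>a\<in>U1. \<forall>b\<in>U2. a + b \<in> W"
    using continuous_add_tvs[OF W(1), of z0 "-z0"] W(2) by auto
  have sub: "U1 \<subseteq> (+) z0 ` V"
  proof
    fix a assume "a \<in> U1"
    hence "a + - z0 \<in> V" using U W by blast
    moreover have "a = z0 + (a + - z0)" by simp
    ultimately show "a \<in> (+) z0 ` V" by blast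
  qed
  have "nbhd ((+) z0 ` V) z0" unfolding nbhd_def using U sub by blast
  then obtain U where Ux: "nbhd U x0" "\<forall>x\<in>U. f x \<inter> (+) z0 ` V \<noteq> {}"
    using assms(9) z0 unfolding lower_continuous_at_def by blast
  have "\<forall>x\<in>U. f x \<inter> (+) z0 ` B \<noteq> {}"
  proof
    fix x assume "x \<in> U"
    then obtain y v where yv: "y \<in> f x" "v \<in> V" "y = z0 + v" using Ux by blast
    then obtain b c where bc: "b \<in> B" "c \<in> C" "v = b - c"
      using assms(6) unfolding set_minus_tvs_def by blast
    have "y + c \<in> set_plus_tvs (f x) C" using yv bc unfolding set_plus_tvs_def by blast
    hence "y + c \<in> f x" using assms(7) closure_subset unfolding FZC_def by blast
    moreover have "y + c = z0 + b" using yv bc by simp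
    ultimately show "f x \<inter> (+) z0 ` B \<noteq> {}" using bc by blast
  qed
  thus ?thesis unfolding efficient_at_def
    using Ux(1) bounded_translate[OF assms(4)] by blast
qed

end
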